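(* Let $(\xi_t)_{t\ge0}$ be a standard Brownian motion started at $0$ under a probability measure $P$. Then for any $\delta>0$, $k>0$ and $t\ge0$, \[P\Big(\int_0^t\mathbf 1_{\{\xi_s\in(-\delta,\delta)\}}ds>k\Big)\le 3e^{t/2-k/(4\delta)}.\] *)

theory Defs
  imports "HOL-Probability.Probability"
begin

definition std_brownian_motion :: "'a measure \<Rightarrow> (real \<Rightarrow> 'a \<Rightarrow> real) \<Rightarrow> bool" where
  "std_brownian_motion M xi \<longleftrightarrow>
     prob_space M \<and>
     (\<forall>t\<ge>0. xi t \<in> borel_measurable M) \<and>
     (\<forall>\<omega>\<in>space M. xi 0 \<omega> = 0) \<and>
     (\<forall>\<omega>\<in>space M. continuous_on {0..} (\<lambda>t. xi t \<omega>)) \<and>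
     (\<forall>s t. 0 \<le> s \<and> s < t \<longrightarrow>
        distributed M lborel (\<lambda>\<omega>. xi t \<omega> - xi s \<omega>)
          (\<lambda>x. ennreal (normal_density 0 (sqrt (t - s)) x))) \<and>
     (\<forall>ts :: real list. sorted_wrt (<) ts \<and> (\<forall>u\<in>set ts. 0 \<le> u) \<longrightarrow>
        prob_space.indep_vars M (\<lambda>_. borel)
          (\<lambda>i \<omega>. xi (ts ! Suc i) \<omega> - xi (ts ! i) \<omega>) {..<length ts - 1})"

end

theory Submission
  imports Defs
begin

lemma abs_lt_iff: "\<bar>a::real\<bar> < b \<longleftrightarrow> -b < a \<and> a < b" by arith

lemma prod_interval_bound:
  fixes Q :: "nat \<Rightarrow> real measure" and b :: "nat \<Rightarrow> real" and \<delta> :: real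
  assumes P: "\<And>i. prob_space (Q i)" and S: "\<And>i. sets (Q i) = sets borel"
    and B: "\<And>i c. i < n \<Longrightarrow> emeasure (Q i) {z. \<bar>c + z\<bar> < \<delta>} \<le> ennreal (b i)"
  shows "emeasure (PiM {..<n} Q) {y \<in> space (PiM {..<n} Q). \<forall>i<n. \<bar>\<Sum>l\<le>i. y l\<bar> < \<delta>}
          \<le> (\<Prod>i<n. ennreal (b i))"
  using B
proof (induction n)
  case 0
  interpret prob_space "PiM {..<0} Q" by (rule prob_space_PiM) (auto intro: P)
  show ?case using emeasure_le_1 by simp
next
  case (Suc n)
  interpret product_prob_space Q
    by (simp add: P product_prob_space_def product_sigma_finite_def prob_space_imp_sigma_finite prob_space_axioms_def prob_space.emeasure_space_1 product_prob_space_axioms_def)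
  have sp[simp]: "\<And>i. space (Q i) = UNIV" using S sets_eq_imp_space_eq by fastforce
  define E where "E m = {y \<in> space (PiM {..<m} Q). \<forall>i<m. \<bar>\<Sum>l\<le>i. y l\<bar> < \<delta>}" for m
  have Em: "E m \<in> sets (PiM {..<m} Q)" for m
  proof -
    have "(\<lambda>y. \<Sum>l\<le>i. y l) \<in> borel_measurable (PiM {..<m} Q)" if "i < m" for i
      using that by (intro borel_measurable_sum) (auto intro!: measurable_PiM_component_rev simp: S measurable_ident_sets)
    then show ?thesis unfolding E_def by measurable
  qed
  have "emeasure (PiM {..<Suc n} Q) (E (Suc n)) = (\<integral>\<^sup>+ y. indicator (E (Suc n)) y \<partial>PiM (insert n {..<n}) Q)"
    using Em[of "Suc n"] unfolding lessThan_Suc by simp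
  also have "\<dots> = (\<integral>\<^sup>+ x. \<integral>\<^sup>+ z. indicator (E (Suc n)) (x(n := z)) \<partial>Q n \<partial>PiM {..<n} Q)"
  proof (rule product_nn_integral_insert)
    have "E (Suc n) \<in> sets (PiM (insert n {..<n}) Q)" using Em[of "Suc n"] by (simp add: lessThan_Suc)
    then show "indicator (E (Suc n)) \<in> borel_measurable (PiM (insert n {..<n}) Q)" by simp
  qed auto
  also have "\<dots> \<le> (\<integral>\<^sup>+ x. indicator (E n) x * ennreal (b n) \<partial>PiM {..<n} Q)"
  proof (rule nn_integral_mono)
    fix x assume x: "x \<in> space (PiM {..<n} Q)"
    have ind: "indicator (E (Suc n)) (x(n := z)) = (indicator (E n) x * indicator {z. \<bar>(\<Sum>l<n. x l) + z\<bar> < \<delta>} z :: ennreal)" for z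
    proof -
      have xs: "x(n := z) \<in> space (PiM {..<Suc n} Q)" using x by (auto simp: space_PiM PiE_def extensional_def)
      have s1: "(\<Sum>l\<le>i. (x(n := z)) l) = (\<Sum>l\<le>i. x l)" if "i < n" for i
        using that by (intro sum.cong) auto
      have s2: "(\<Sum>l\<le>n. (x(n := z)) l) = (\<Sum>l<n. x l) + z"
        by (simp add: lessThan_Suc_atMost[symmetric] sum.lessThan_Suc) 
      have "(\<forall>i<Suc n. \<bar>\<Sum>l\<le>i. (x(n := z)) l\<bar> < \<delta>) \<longleftrightarrow> (\<forall>i<n. \<bar>\<Sum>l\<le>i. x l\<bar> < \<delta>) \<and> \<bar>(\<Sum>l<n. x l) + z\<bar> < \<delta>"
        using s1 s2 by (auto simp: less_Suc_eq)
      then have mem: "x(n := z) \<in> E (Suc n) \<longleftrightarrow> x \<in> E n \<and> z \<in> {z. \<bar>(\<Sum>l<n. x l) + z\<bar> < \<delta>}"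
        using x xs unfolding E_def by blast
      show ?thesis unfolding indicator_def mem by simp
    qed
    have "(\<integral>\<^sup>+ z. indicator (E (Suc n)) (x(n := z)) \<partial>Q n) = indicator (E n) x * (\<integral>\<^sup>+ z. indicator {z. \<bar>(\<Sum>l<n. x l) + z\<bar> < \<delta>} z \<partial>Q n)"
      unfolding ind by (rule nn_integral_cmult) (simp add: measurable_cong_sets[OF S refl])
    also have "\<dots> = indicator (E n) x * emeasure (Q n) {z. \<bar>(\<Sum>l<n. x l) + z\<bar> < \<delta>}"
    proof -
      have "{z. \<bar>(\<Sum>l<n. x l) + z\<bar> < \<delta>} \<in> sets (Q n)" unfolding S by measurable
      then show ?thesis by simp
    qed
    also have "\<dots> \<le> indicator (E n) x * ennreal (b n)"
      by (intro mult_left_mono Suc.prems) auto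
    finally show "(\<integral>\<^sup>+ z. indicator (E (Suc n)) (x(n := z)) \<partial>Q n) \<le> indicator (E n) x * ennreal (b n)" .
  qed
  also have "\<dots> = emeasure (PiM {..<n} Q) (E n) * ennreal (b n)"
    using Em by (simp add: nn_integral_multc)
  also have "\<dots> \<le> (\<Prod>i<n. ennreal (b i)) * ennreal (b n)"
    using Suc.IH Suc.prems unfolding E_def by (intro mult_right_mono) auto
  finally show ?case unfolding E_def by (simp add: mult.commute)
qed

lemma normal_interval_bound:
  fixes X :: "'a \<Rightarrow> real"
  assumes D: "distributed M lborel X (\<lambda>x. ennreal (normal_density 0 (sqrt s) x))"
    and s: "s > 0" and d: "\<delta> > 0"
  shows "emeasure (distr M borel X) {z. \<bar>c + z\<bar> < \<delta>} \<le> ennreal (2 * \<delta> / sqrt (2 * pi * s))"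
proof -
  have "distr M borel X = distr M lborel X" by (rule distr_cong) auto
  also have "\<dots> = density lborel (\<lambda>x. ennreal (normal_density 0 (sqrt s) x))"
    using D by (simp add: distributed_def)
  finally have eq: "distr M borel X = density lborel (\<lambda>x. ennreal (normal_density 0 (sqrt s) x))" .
  have A: "{z. \<bar>c + z\<bar> < \<delta>} = {-c-\<delta><..<\<delta>-c}" by auto
  have "emeasure (distr M borel X) {z. \<bar>c + z\<bar> < \<delta>}
      = (\<integral>\<^sup>+ x. ennreal (normal_density 0 (sqrt s) x) * indicator {-c-\<delta><..<\<delta>-c} x \<partial>lborel)"
    unfolding eq A by (rule emeasure_density) auto
  also have "\<dots> \<le> (\<integral>\<^sup>+ x. ennreal (1 / sqrt (2 * pi * s)) * indicator {-c-\<delta><..<\<delta>-c} x \<partial>lborel)"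
  proof (rule nn_integral_mono)
    fix x
    have "normal_density 0 (sqrt s) x \<le> 1 / sqrt (2 * pi * s)"
      using s by (simp add: normal_density_def divide_right_mono)
    then show "ennreal (normal_density 0 (sqrt s) x) * indicator {-c-\<delta><..<\<delta>-c} x
        \<le> ennreal (1 / sqrt (2 * pi * s)) * indicator {-c-\<delta><..<\<delta>-c} x"
      by (intro mult_right_mono ennreal_leI) auto
  qed
  also have "\<dots> = ennreal (1 / sqrt (2 * pi * s)) * ennreal (2 * \<delta>)"
    using d by (subst nn_integral_cmult_indicator) auto
  also have "\<dots> = ennreal (2 * \<delta> / sqrt (2 * pi * s))"
    using d s by (simp add: ennreal_mult''[symmetric])
  finally show ?thesis .
qed

lemma bm_ball_prob:
  assumes bm: "std_brownian_motion M xi" and d: "\<delta> > 0"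
    and sorted: "sorted_wrt (<) ss" and pos: "\<forall>s\<in>set ss. 0 < s"
  shows "emeasure M {\<omega>\<in>space M. \<forall>s\<in>set ss. \<bar>xi s \<omega>\<bar> < \<delta>}
     \<le> (\<Prod>i<length ss. ennreal (2 * \<delta> / sqrt (2 * pi * ((0#ss) ! Suc i - (0#ss) ! i))))"
proof -
  interpret prob_space M using bm by (simp add: std_brownian_motion_def)
  define ts where "ts = 0 # ss"
  define n where "n = length ss"
  define Y where "Y i \<omega> = xi (ts ! Suc i) \<omega> - xi (ts ! i) \<omega>" for i \<omega>
  show ?thesis
  proof (cases "n = 0")
    case True
    then show ?thesis using emeasure_space_1 emeasure_mono[of _ "space M" M]
      by (simp add: n_def)
  next
    case False
    have ts_sorted: "sorted_wrt (<) ts" using sorted pos by (simp add: ts_def)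
    have ts_nonneg: "\<forall>u\<in>set ts. 0 \<le> u" using pos by (auto simp: ts_def)
    have lts: "length ts - 1 = n" by (simp add: ts_def n_def)
    have "prob_space.indep_vars M (\<lambda>_. borel) (\<lambda>i \<omega>. xi (ts ! Suc i) \<omega> - xi (ts ! i) \<omega>) {..<length ts - 1}"
      using bm ts_sorted ts_nonneg unfolding std_brownian_motion_def by blast
    then have ind: "indep_vars (\<lambda>_. borel) Y {..<n}" unfolding lts Y_def[abs_def] .
    have tsnn: "0 \<le> ts ! i" if "i \<le> n" for i
    proof -
      have "i < length ts" using that by (simp add: ts_def n_def)
      then show ?thesis using ts_nonneg nth_mem by blast
    qed
    have tsinc: "ts ! i < ts ! Suc i" if "i < n" for i
    proof -
      have "Suc i < length ts" using that by (simp add: ts_def n_def)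
      then show ?thesis using ts_sorted unfolding sorted_wrt_iff_nth_less by blast
    qed
    have meas: "xi u \<in> borel_measurable M" if "0 \<le> u" for u
      using bm that by (simp add: std_brownian_motion_def)
    have rv: "random_variable borel (Y i)" if "i < n" for i
      unfolding Y_def using meas tsnn that by auto
    have distY: "distributed M lborel (Y i) (\<lambda>x. ennreal (normal_density 0 (sqrt (ts ! Suc i - ts ! i)) x))"
      if "i < n" for i
      using bm tsnn[of i] tsinc[OF that] that unfolding std_brownian_motion_def Y_def by simp
    define Q where "Q i = (if i < n then distr M borel (Y i) else return borel 0)" for i
    have Qp: "prob_space (Q i)" for i
      by (auto simp: Q_def intro!: prob_space_distr rv prob_space_return)
    have Qs: "sets (Q i) = sets borel" for i by (simp add: Q_def)
    have Qb: "emeasure (Q i) {z. \<bar>c + z\<bar> < \<delta>} \<le> ennreal (2 * \<delta> / sqrt (2 * pi * (ts ! Suc i - ts ! i)))"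
      if "i < n" for i c
      using normal_interval_bound[OF distY[OF that] _ d] tsinc[OF that] that by (simp add: Q_def)
    have PiQ: "PiM {..<n} Q = PiM {..<n} (\<lambda>i. distr M borel (Y i))"
      by (rule PiM_cong) (auto simp: Q_def)
    have dist: "distr M (PiM {..<n} (\<lambda>_. borel)) (\<lambda>x. \<lambda>i\<in>{..<n}. Y i x) = PiM {..<n} Q"
    proof -
      have "indep_vars (\<lambda>_. borel) Y {..<n} \<longleftrightarrow>
          distr M (PiM {..<n} (\<lambda>_. borel)) (\<lambda>x. \<lambda>i\<in>{..<n}. Y i x) = PiM {..<n} (\<lambda>i. distr M borel (Y i))"
        by (rule indep_vars_iff_distr_eq_PiM') (use False rv in auto)
      then show ?thesis using ind PiQ by simp
    qed
    define E where "E = {y \<in> space (PiM {..<n} Q). \<forall>i<n. \<bar>\<Sum>l\<le>i. y l\<bar> < \<delta>}"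
    have spQ: "space (PiM {..<n} Q) = space (PiM {..<n} (\<lambda>_. borel :: real measure))"
      by (simp add: space_PiM Qs sets_eq_imp_space_eq[OF Qs])
    have Esets: "E \<in> sets (PiM {..<n} (\<lambda>_. borel :: real measure))"
    proof -
      have "(\<lambda>y. \<Sum>l\<le>i. y l) \<in> borel_measurable (PiM {..<n} (\<lambda>_. borel :: real measure))" if "i < n" for i
        using that by (intro borel_measurable_sum) auto
      then show ?thesis unfolding E_def spQ by measurable
    qed
    have tuple: "(\<lambda>x. \<lambda>i\<in>{..<n}. Y i x) \<in> measurable M (PiM {..<n} (\<lambda>_. borel))"
      using rv by (auto intro!: measurable_restrict)
    have tele: "(\<Sum>l\<le>i. Y l \<omega>) = xi (ss ! i) \<omega>" if "\<omega> \<in> space M" "i < n" for \<omega> i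
    proof -
      have "(\<Sum>l\<le>i. Y l \<omega>) = (\<Sum>l<Suc i. xi (ts ! Suc l) \<omega> - xi (ts ! l) \<omega>)"
        by (simp add: Y_def lessThan_Suc_atMost)
      also have "\<dots> = xi (ts ! Suc i) \<omega> - xi (ts ! 0) \<omega>"
        by (rule sum_lessThan_telescope)
      also have "\<dots> = xi (ss ! i) \<omega>"
        using bm that(1) by (simp add: ts_def std_brownian_motion_def)
      finally show ?thesis .
    qed
    have seteq: "{\<omega>\<in>space M. \<forall>s\<in>set ss. \<bar>xi s \<omega>\<bar> < \<delta>} = (\<lambda>x. \<lambda>i\<in>{..<n}. Y i x) -` E \<inter> space M"
    proof -
      have "(\<forall>s\<in>set ss. \<bar>xi s \<omega>\<bar> < \<delta>) \<longleftrightarrow> (\<forall>i<n. \<bar>\<Sum>l\<le>i. (\<lambda>i\<in>{..<n}. Y i \<omega>) l\<bar> < \<delta>)"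
        if "\<omega> \<in> space M" for \<omega>
      proof -
        have "(\<Sum>l\<le>i. (\<lambda>i\<in>{..<n}. Y i \<omega>) l) = xi (ss ! i) \<omega>" if "i < n" for i
        proof -
          have "(\<Sum>l\<le>i. (\<lambda>i\<in>{..<n}. Y i \<omega>) l) = (\<Sum>l\<le>i. Y l \<omega>)"
            using that by (intro sum.cong) auto
          then show ?thesis using tele[OF \<open>\<omega> \<in> space M\<close> that] by simp
        qed
        then show ?thesis by (auto simp: all_set_conv_all_nth n_def)
      qed
      moreover have "(\<lambda>i\<in>{..<n}. Y i \<omega>) \<in> space (PiM {..<n} Q)" for \<omega>
        by (simp add: space_PiM sets_eq_imp_space_eq[OF Qs])
      ultimately show ?thesis unfolding E_def by blast
    qed
    have "emeasure M {\<omega>\<in>space M. \<forall>s\<in>set ss. \<bar>xi s \<omega>\<bar> < \<delta>} = emeasure (PiM {..<n} Q) E"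
      unfolding seteq dist[symmetric] by (rule emeasure_distr[symmetric, OF tuple Esets])
    also have "\<dots> \<le> (\<Prod>i<n. ennreal (2 * \<delta> / sqrt (2 * pi * (ts ! Suc i - ts ! i))))"
      unfolding E_def by (rule prod_interval_bound[OF Qp Qs Qb])
    finally show ?thesis by (simp add: ts_def n_def)
  qed
qed

fun pp :: "(nat \<Rightarrow> real) \<Rightarrow> nat \<Rightarrow> nat list \<Rightarrow> real" where
  "pp f q [] = 1"
| "pp f q (j # js) = f (j - q) * pp f j js"

lemma pp_append: "pp f q (js @ [x]) = pp f q js * f (x - last (q # js))"
  by (induction js arbitrary: q) auto

lemma pp_nonneg: "(\<And>g. f g \<ge> 0) \<Longrightarrow> pp f q js \<ge> 0"
  by (induction js arbitrary: q) auto

fun gpr :: "(real \<Rightarrow> real) \<Rightarrow> real \<Rightarrow> real list \<Rightarrow> real" where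
  "gpr F q [] = 1"
| "gpr F q (s # ss) = F (s - q) * gpr F s ss"

lemma prod_nth_gpr: "(\<Prod>i<length ss. F ((q#ss) ! Suc i - (q#ss) ! i)) = gpr F q ss"
proof (induction ss arbitrary: q)
  case Nil then show ?case by simp
next
  case (Cons s ss)
  have "(\<Prod>i<length (s#ss). F ((q#s#ss) ! Suc i - (q#s#ss) ! i))
      = F (s - q) * (\<Prod>i<length ss. F ((s#ss) ! Suc i - (s#ss) ! i))"
    unfolding length_Cons prod.lessThan_Suc_shift by simp
  then show ?case using Cons by simp
qed

lemma gpr_pp: "sorted_wrt (<) (q#js) \<Longrightarrow>
  gpr F (real q * h) (map (\<lambda>j. real j * h) js) = pp (\<lambda>g. F (real g * h)) q js"
proof (induction js arbitrary: q)
  case Nil then show ?case by simp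
next
  case (Cons j js)
  then have "q < j" by simp
  then have "real j * h - real q * h = real (j - q) * h" by (simp add: of_nat_diff left_diff_distrib)
  then show ?case using Cons by simp
qed

lemma prod_indicator_Int:
  assumes "finite A"
  shows "(\<Prod>j\<in>A. (indicator (B j) x :: ennreal)) = indicator {x. \<forall>j\<in>A. x \<in> B j} x"
  using assms by (induction A rule: finite_induct) (auto simp: indicator_def)

lemma prod_cc:
  fixes F :: "'b \<Rightarrow> real"
  shows "(\<Prod>j\<in>set js. (indicator {-\<delta><..<\<delta>} (F j) :: ennreal)) = (if \<forall>j\<in>set js. \<bar>F j\<bar> < \<delta> then 1 else 0)"
proof (cases "\<forall>j\<in>set js. \<bar>F j\<bar> < \<delta>")
  case True
  then have "(\<Prod>j\<in>set js. (indicator {-\<delta><..<\<delta>} (F j) :: ennreal)) = 1"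
  proof (intro prod.neutral ballI)
    fix j assume "j \<in> set js"
    then have "\<bar>F j\<bar> < \<delta>" using True by blast
    then show "(indicator {-\<delta><..<\<delta>} (F j) :: ennreal) = 1" by (simp add: indicator_def abs_lt_iff)
  qed
  then show ?thesis using True by simp
next
  case False
  then obtain j where j: "j \<in> set js" "\<not> \<bar>F j\<bar> < \<delta>" by blast
  have "(indicator {-\<delta><..<\<delta>} (F j) :: ennreal) = 0" using j(2) by (simp add: indicator_def abs_lt_iff)
  then have "(\<Prod>j\<in>set js. (indicator {-\<delta><..<\<delta>} (F j) :: ennreal)) = 0"
    using j(1) by (intro prod_zero bexI[of _ j]) auto
  then show ?thesis using False by (subst if_not_P) auto
qed

lemma bm_list_prob:
  assumes bm: "std_brownian_motion M xi" and d: "\<delta> > 0" and h: "h > 0"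
    and sorted: "sorted_wrt (<) (0#js)"
  shows "emeasure M {\<omega>\<in>space M. \<forall>j\<in>set js. \<bar>xi (real j * h) \<omega>\<bar> < \<delta>}
     \<le> ennreal (pp (\<lambda>g. 2 * \<delta> / sqrt (2 * pi * (real g * h))) 0 js)"
proof -
  define ss where "ss = map (\<lambda>j. real j * h) js"
  have s1: "sorted_wrt (<) ss" using sorted h unfolding ss_def
    by (auto simp: sorted_wrt_map elim!: sorted_wrt_mono_rel[rotated])
  have s2: "\<forall>s\<in>set ss. 0 < s" using sorted h unfolding ss_def by auto
  have seq: "{\<omega>\<in>space M. \<forall>j\<in>set js. \<bar>xi (real j * h) \<omega>\<bar> < \<delta>} = {\<omega>\<in>space M. \<forall>s\<in>set ss. \<bar>xi s \<omega>\<bar> < \<delta>}"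
    unfolding ss_def by auto
  have "emeasure M {\<omega>\<in>space M. \<forall>s\<in>set ss. \<bar>xi s \<omega>\<bar> < \<delta>}
     \<le> (\<Prod>i<length ss. ennreal (2 * \<delta> / sqrt (2 * pi * ((0#ss) ! Suc i - (0#ss) ! i))))"
    by (rule bm_ball_prob[OF bm d s1 s2])
  also have "\<dots> = ennreal (\<Prod>i<length ss. 2 * \<delta> / sqrt (2 * pi * ((0#ss) ! Suc i - (0#ss) ! i)))"
  proof (rule prod_ennreal)
    fix i assume "i \<in> {..<length ss}"
    then have "(0#ss) ! i < (0#ss) ! Suc i" using s1 s2
      by (cases i) (auto simp: sorted_wrt_iff_nth_less)
    then show "0 \<le> 2 * \<delta> / sqrt (2 * pi * ((0#ss) ! Suc i - (0#ss) ! i))" using d by auto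
  qed
  also have "\<dots> = ennreal (gpr (\<lambda>x. 2 * \<delta> / sqrt (2 * pi * x)) 0 ss)"
    by (subst prod_nth_gpr[of "\<lambda>x. 2 * \<delta> / sqrt (2 * pi * x)"]) simp
  also have "gpr (\<lambda>x. 2 * \<delta> / sqrt (2 * pi * x)) 0 ss = pp (\<lambda>g. 2 * \<delta> / sqrt (2 * pi * (real g * h))) 0 js"
    using gpr_pp[OF sorted, of "\<lambda>x. 2 * \<delta> / sqrt (2 * pi * x)" h] unfolding ss_def by simp
  finally show ?thesis unfolding seq .
qed

lemma disc_moment:
  fixes a \<delta> h :: real and N :: nat and M :: "'a measure"
  assumes bm: "std_brownian_motion M xi" and d: "\<delta> > 0" and h: "h > 0" and a: "a \<ge> 0"
    and R1: "(\<Sum>g\<in>{1..N}. a * (2 * \<delta> / sqrt (2 * pi * (real g * h))) * exp (-(real g * h) / 2)) < 1"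
  shows "(\<integral>\<^sup>+\<omega>. (\<Prod>j\<in>{0<..N}. 1 + ennreal a * indicator {-\<delta><..<\<delta>} (xi (real j * h) \<omega>)) \<partial>M)
     \<le> ennreal (exp (real N * h / 2) / (1 - (\<Sum>g\<in>{1..N}. a * (2 * \<delta> / sqrt (2 * pi * (real g * h))) * exp (-(real g * h) / 2))))"
proof -
  interpret prob_space M using bm by (simp add: std_brownian_motion_def)
  define pf where "pf g = 2 * \<delta> / sqrt (2 * pi * (real g * h))" for g :: nat
  define r where "r g = a * pf g * exp (-(real g * h) / 2)" for g :: nat
  define R where "R = (\<Sum>g\<in>{1..N}. r g)"
  define K where "K = 1 / (1 - R)"
  define \<Psi> where "\<Psi> d = 1 + K * (\<Sum>g\<in>{d<..N}. r g)" for d :: nat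
  define cc where "cc j \<omega> = (indicator {-\<delta><..<\<delta>} (xi (real j * h) \<omega>) :: ennreal)" for j \<omega>
  have R1': "R < 1" using R1 unfolding R_def r_def pf_def .
  have meas[measurable]: "xi (real j * h) \<in> borel_measurable M" for j
    using bm h by (simp add: std_brownian_motion_def)
  have ccm[measurable]: "(\<lambda>\<omega>. cc j \<omega>) \<in> borel_measurable M" for j
    unfolding cc_def by measurable
  have pfnn: "pf g \<ge> 0" for g using d h by (simp add: pf_def)
  have rnn: "r g \<ge> 0" for g using a pfnn by (simp add: r_def)
  have Kpos: "K > 0" using R1' by (simp add: K_def)
  have Psi1: "\<Psi> d \<ge> 1" for d using Kpos rnn by (simp add: \<Psi>_def sum_nonneg)
  have Psi0: "\<Psi> 0 = K"
  proof -
    have "{0<..N} = {1..N}" by auto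
    then have "\<Psi> 0 = 1 + K * R" by (simp add: \<Psi>_def R_def)
    also have "\<dots> = K" using R1' by (simp add: K_def field_simps)
    finally show ?thesis .
  qed
  have Psistep: "\<Psi> d = \<Psi> (Suc d) + r (Suc d) * K" if "d < N" for d
  proof -
    have "{d<..N} = insert (Suc d) {Suc d<..N}" using that by auto
    then have "(\<Sum>g\<in>{d<..N}. r g) = r (Suc d) + (\<Sum>g\<in>{Suc d<..N}. r g)" by simp
    then show ?thesis by (simp add: \<Psi>_def algebra_simps)
  qed
  have ppnn: "pp pf q js \<ge> 0" for q js using pp_nonneg[of pf] pfnn by blast
  have claim: "\<forall>p js. N - p = m \<longrightarrow> p \<le> N \<longrightarrow> sorted_wrt (<) (0#js) \<longrightarrow> (\<forall>j\<in>set js. j \<le> p) \<longrightarrow>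
     ennreal (a ^ length js) * (\<integral>\<^sup>+\<omega>. (\<Prod>j\<in>set js. cc j \<omega>) * (\<Prod>j\<in>{p<..N}. 1 + ennreal a * cc j \<omega>) \<partial>M)
     \<le> ennreal (a ^ length js * pp pf 0 js * exp (-(real (last (0#js)) * h) / 2) * exp (real N * h / 2)
          * \<Psi> (p - last (0#js)))" for m
  proof (induction m)
    case 0
    show ?case
    proof (intro allI impI)
      fix p js assume p: "N - p = 0" "p \<le> N" and s: "sorted_wrt (<) (0#js)" and le: "\<forall>j\<in>set js. j \<le> p"
      define q where "q = last (0#js)"
      have pN: "p = N" using p by simp
      have qN: "q \<le> N" using le pN unfolding q_def by (cases js rule: rev_cases) auto
      define S where "S = {\<omega>\<in>space M. \<forall>j\<in>set js. \<bar>xi (real j * h) \<omega>\<bar> < \<delta>}"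
      have Ss: "S \<in> sets M" unfolding S_def by measurable
      have "(\<integral>\<^sup>+\<omega>. (\<Prod>j\<in>set js. cc j \<omega>) * (\<Prod>j\<in>{p<..N}. 1 + ennreal a * cc j \<omega>) \<partial>M)
          = (\<integral>\<^sup>+\<omega>. indicator S \<omega> \<partial>M)"
      proof (rule nn_integral_cong)
        fix \<omega> assume "\<omega> \<in> space M"
        then show "(\<Prod>j\<in>set js. cc j \<omega>) * (\<Prod>j\<in>{p<..N}. 1 + ennreal a * cc j \<omega>) = indicator S \<omega>"
          unfolding cc_def pN S_def prod_cc by (simp add: indicator_def)
      qed
      also have "\<dots> = emeasure M S" using Ss by simp
      also have "\<dots> \<le> ennreal (pp pf 0 js)"
        unfolding S_def pf_def by (rule bm_list_prob[OF bm d h s])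
      finally have I: "(\<integral>\<^sup>+\<omega>. (\<Prod>j\<in>set js. cc j \<omega>) * (\<Prod>j\<in>{p<..N}. 1 + ennreal a * cc j \<omega>) \<partial>M)
          \<le> ennreal (pp pf 0 js)" .
      have e1: "1 \<le> exp (-(real q * h) / 2) * exp (real N * h / 2)"
      proof -
        have "exp (-(real q * h) / 2) * exp (real N * h / 2) = exp ((real N - real q) * h / 2)"
          by (simp add: exp_add[symmetric] field_simps)
        also have "1 \<le> \<dots>" using qN h by simp
        finally show ?thesis .
      qed
      have "a ^ length js * pp pf 0 js \<le> a ^ length js * pp pf 0 js * (exp (-(real q * h) / 2) * exp (real N * h / 2)) * \<Psi> (p - q)"
      proof -
        have "1 * 1 \<le> (exp (-(real q * h) / 2) * exp (real N * h / 2)) * \<Psi> (p - q)"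
          by (rule mult_mono[OF e1 Psi1[of "p - q"]]) auto
        then have E: "1 \<le> (exp (-(real q * h) / 2) * exp (real N * h / 2)) * \<Psi> (p - q)" by simp
        have z0: "0 \<le> a ^ length js * pp pf 0 js" using a ppnn[of 0 js] by simp
        have "a ^ length js * pp pf 0 js * 1 \<le> a ^ length js * pp pf 0 js * ((exp (-(real q * h) / 2) * exp (real N * h / 2)) * \<Psi> (p - q))"
          by (rule mult_left_mono[OF E z0])
        then show ?thesis by (simp add: mult.assoc)
      qed
      then have "ennreal (a ^ length js) * ennreal (pp pf 0 js) \<le> ennreal (a ^ length js * pp pf 0 js * exp (-(real q * h) / 2) * exp (real N * h / 2) * \<Psi> (p - q))"
        using a ppnn[of 0 js] by (simp add: ennreal_mult[symmetric] mult.assoc ennreal_leI)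
      then show "ennreal (a ^ length js) * (\<integral>\<^sup>+\<omega>. (\<Prod>j\<in>set js. cc j \<omega>) * (\<Prod>j\<in>{p<..N}. 1 + ennreal a * cc j \<omega>) \<partial>M)
         \<le> ennreal (a ^ length js * pp pf 0 js * exp (-(real (last (0#js)) * h) / 2) * exp (real N * h / 2) * \<Psi> (p - last (0#js)))"
        unfolding q_def[symmetric] using I by (meson mult_left_mono order_trans zero_le)
    qed
  next
    case (Suc m)
    show ?case
    proof (intro allI impI)
      fix p js assume p: "N - p = Suc m" "p \<le> N" and s: "sorted_wrt (<) (0#js)" and le: "\<forall>j\<in>set js. j \<le> p"
      define q where "q = last (0#js)"
      have pN: "p < N" using p by simp
      have qp: "q \<le> p" using le unfolding q_def by (cases js rule: rev_cases) auto
      define X where "X \<omega> = (\<Prod>j\<in>set js. cc j \<omega>)" for \<omega>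
      define Y where "Y \<omega> = (\<Prod>j\<in>{Suc p<..N}. 1 + ennreal a * cc j \<omega>)" for \<omega>
      have Xm[measurable]: "X \<in> borel_measurable M" unfolding X_def by measurable
      have Ym[measurable]: "Y \<in> borel_measurable M" unfolding Y_def by measurable
      have notin: "Suc p \<notin> set js" using le by auto
      have js2: "set (js @ [Suc p]) = insert (Suc p) (set js)" by simp
      have Xc: "X \<omega> * cc (Suc p) \<omega> = (\<Prod>j\<in>set (js @ [Suc p]). cc j \<omega>)" for \<omega>
        unfolding js2 X_def using notin by (simp add: mult.commute)
      have ins: "{p<..N} = insert (Suc p) {Suc p<..N}" using pN by auto
      have split: "(\<Prod>j\<in>set js. cc j \<omega>) * (\<Prod>j\<in>{p<..N}. 1 + ennreal a * cc j \<omega>)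
          = X \<omega> * Y \<omega> + ennreal a * ((\<Prod>j\<in>set (js @ [Suc p]). cc j \<omega>) * Y \<omega>)" for \<omega>
        unfolding ins Xc[symmetric] by (simp add: X_def Y_def algebra_simps)
      have s2: "sorted_wrt (<) (0 # js @ [Suc p])"
        using s le by (simp add: sorted_wrt_append) (metis le_imp_less_Suc)
      have A1: "ennreal (a ^ length js) * (\<integral>\<^sup>+\<omega>. X \<omega> * Y \<omega> \<partial>M)
          \<le> ennreal (a ^ length js * pp pf 0 js * exp (-(real q * h) / 2) * exp (real N * h / 2) * \<Psi> (Suc p - q))"
        using Suc.IH[rule_format, of "Suc p" js] p s le unfolding X_def Y_def q_def by fastforce
      have A2: "ennreal (a ^ length (js @ [Suc p])) * (\<integral>\<^sup>+\<omega>. (\<Prod>j\<in>set (js @ [Suc p]). cc j \<omega>) * Y \<omega> \<partial>M)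
          \<le> ennreal (a ^ length (js @ [Suc p]) * pp pf 0 (js @ [Suc p]) * exp (-(real (Suc p) * h) / 2) * exp (real N * h / 2) * \<Psi> 0)"
        using Suc.IH[rule_format, of "Suc p" "js @ [Suc p]"] p s2 le unfolding Y_def by fastforce
      have "ennreal (a ^ length js) * (\<integral>\<^sup>+\<omega>. (\<Prod>j\<in>set js. cc j \<omega>) * (\<Prod>j\<in>{p<..N}. 1 + ennreal a * cc j \<omega>) \<partial>M)
          = ennreal (a ^ length js) * (\<integral>\<^sup>+\<omega>. X \<omega> * Y \<omega> \<partial>M)
            + ennreal (a ^ length (js @ [Suc p])) * (\<integral>\<^sup>+\<omega>. (\<Prod>j\<in>set (js @ [Suc p]). cc j \<omega>) * Y \<omega> \<partial>M)"
      proof -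
        have "(\<integral>\<^sup>+\<omega>. (\<Prod>j\<in>set js. cc j \<omega>) * (\<Prod>j\<in>{p<..N}. 1 + ennreal a * cc j \<omega>) \<partial>M)
            = (\<integral>\<^sup>+\<omega>. X \<omega> * Y \<omega> \<partial>M) + ennreal a * (\<integral>\<^sup>+\<omega>. (\<Prod>j\<in>set (js @ [Suc p]). cc j \<omega>) * Y \<omega> \<partial>M)"
          unfolding split by (subst nn_integral_add) (auto intro!: nn_integral_cmult)
        then show ?thesis using a
          by (simp add: distrib_left ennreal_mult mult_ac)
      qed
      also have "\<dots> \<le> ennreal (a ^ length js * pp pf 0 js * exp (-(real q * h) / 2) * exp (real N * h / 2) * \<Psi> (Suc p - q))
            + ennreal (a ^ length (js @ [Suc p]) * pp pf 0 (js @ [Suc p]) * exp (-(real (Suc p) * h) / 2) * exp (real N * h / 2) * \<Psi> 0)"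
        by (rule add_mono[OF A1 A2])
      also have "\<dots> = ennreal (a ^ length js * pp pf 0 js * exp (-(real q * h) / 2) * exp (real N * h / 2) * \<Psi> (p - q))"
      proof -
        define B where "B = a ^ length js * pp pf 0 js * exp (-(real q * h) / 2) * exp (real N * h / 2)"
        have Bnn: "B \<ge> 0" using a ppnn[of 0 js] by (simp add: B_def)
        have ex: "exp (-(real (Suc p) * h) / 2) = exp (-(real q * h) / 2) * exp (-(real (Suc p - q) * h) / 2)"
          using qp by (simp add: exp_add[symmetric] of_nat_diff field_simps)
        have T2: "a ^ length (js @ [Suc p]) * pp pf 0 (js @ [Suc p]) * exp (-(real (Suc p) * h) / 2) * exp (real N * h / 2) * \<Psi> 0
            = B * (r (Suc p - q) * K)"
          unfolding B_def r_def ex Psi0 pp_append q_def by (simp add: algebra_simps)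
        have T1: "a ^ length js * pp pf 0 js * exp (-(real q * h) / 2) * exp (real N * h / 2) * \<Psi> (Suc p - q) = B * \<Psi> (Suc p - q)"
          by (simp add: B_def)
        have T3: "a ^ length js * pp pf 0 js * exp (-(real q * h) / 2) * exp (real N * h / 2) * \<Psi> (p - q)
            = B * \<Psi> (Suc p - q) + B * (r (Suc p - q) * K)"
          using Psistep[of "p - q"] pN qp by (simp add: B_def Suc_diff_le distrib_left)
        have n1: "0 \<le> B * \<Psi> (Suc p - q)" using Bnn Psi1[of "Suc p - q"] by simp
        have n2: "0 \<le> B * (r (Suc p - q) * K)" using Bnn rnn[of "Suc p - q"] Kpos by simp
        show ?thesis unfolding T1 T2 T3 by (rule ennreal_plus[symmetric, OF n1 n2])
      qed
      finally show "ennreal (a ^ length js) * (\<integral>\<^sup>+\<omega>. (\<Prod>j\<in>set js. cc j \<omega>) * (\<Prod>j\<in>{p<..N}. 1 + ennreal a * cc j \<omega>) \<partial>M)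
         \<le> ennreal (a ^ length js * pp pf 0 js * exp (-(real (last (0#js)) * h) / 2) * exp (real N * h / 2) * \<Psi> (p - last (0#js)))"
        unfolding q_def .
    qed
  qed
  have "ennreal (a ^ length []) * (\<integral>\<^sup>+\<omega>. (\<Prod>j\<in>set []. cc j \<omega>) * (\<Prod>j\<in>{0<..N}. 1 + ennreal a * cc j \<omega>) \<partial>M)
     \<le> ennreal (a ^ length [] * pp pf 0 [] * exp (-(real (last [0]) * h) / 2) * exp (real N * h / 2) * \<Psi> (0 - last [0]))"
    using claim[of N, rule_format, of 0 "[]"] by simp
  then have "(\<integral>\<^sup>+\<omega>. (\<Prod>j\<in>{0<..N}. 1 + ennreal a * cc j \<omega>) \<partial>M) \<le> ennreal (exp (real N * h / 2) * K)"
    by (simp add: Psi0)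
  then show ?thesis unfolding cc_def K_def R_def r_def pf_def by simp
qed

lemma inv_sqrt_sum_bound: "(\<Sum>g\<in>{1..M}. 1 / sqrt (real g)) \<le> 2 * sqrt (real M)"
proof (induction M)
  case 0 then show ?case by simp
next
  case (Suc M)
  define a where "a = sqrt (real (Suc M))"
  define b where "b = sqrt (real M)"
  have a0: "a > 0" by (simp add: a_def)
  have b0: "b \<ge> 0" by (simp add: b_def)
  have ab: "a^2 = b^2 + 1" by (simp add: a_def b_def)
  have "0 \<le> (a - b)^2" by simp
  then have "2 * a * b \<le> a^2 + b^2" by (simp add: power2_diff)
  then have "1 + 2 * a * b \<le> 2 * a^2" using ab by simp
  then have "(1 + 2 * a * b) / a \<le> 2 * a^2 / a" using a0 by (simp add: divide_right_mono)
  then have key: "1 / a + 2 * b \<le> 2 * a" using a0 by (simp add: field_simps power2_eq_square)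
  have "(\<Sum>g\<in>{1..Suc M}. 1 / sqrt (real g)) = (\<Sum>g\<in>{1..M}. 1 / sqrt (real g)) + 1 / a"
    by (simp add: a_def)
  also have "\<dots> \<le> 2 * b + 1 / a" using Suc by (simp add: b_def)
  also have "\<dots> \<le> 2 * a" using key by simp
  finally show ?case by (simp add: a_def)
qed

lemma geom_tail_bound:
  fixes x :: real
  assumes "0 \<le> x" "x < 1"
  shows "(\<Sum>g\<in>{M<..N}. x ^ g) \<le> x ^ Suc M / (1 - x)"
proof (cases "Suc M \<le> N")
  case True
  have "(1 - x) * (\<Sum>g=Suc M..N. x ^ g) = x ^ Suc M - x ^ Suc N"
    by (rule sum_gp_multiplied[OF True])
  also have "\<dots> \<le> x ^ Suc M" using assms by simp
  finally have "(1 - x) * (\<Sum>g=Suc M..N. x ^ g) \<le> x ^ Suc M" .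
  then show ?thesis using assms by (simp add: atLeastSucAtMost_greaterThanAtMost field_simps)
next
  case False
  then have "{M<..N} = {}" by auto
  then show ?thesis using assms by simp
qed

lemma expsum_bound:
  fixes h :: real
  assumes h: "0 < h" "h \<le> 1/100"
  shows "sqrt h * (\<Sum>g\<in>{1..N}. exp (-(real g * h) / 2) / sqrt (real g)) \<le> 2 + (2 + h) * exp (-1/2)"
proof -
  define M where "M = nat \<lfloor>1 / h\<rfloor>"
  have M1: "real M \<le> 1 / h" using h by (simp add: M_def)
  have M2: "1 / h < real M + 1" using h by (simp add: M_def; linarith)
  have Mh1: "1 \<le> (real M + 1) * h" using M2 h by (simp add: field_simps)
  define f where "f g = exp (-(real g * h) / 2) / sqrt (real g)" for g :: nat
  have fnn: "f g \<ge> 0" for g by (simp add: f_def)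
  define x where "x = exp (-h / 2)"
  have x0: "0 \<le> x" "x < 1" using h by (auto simp: x_def)
  have S1: "(\<Sum>g\<in>{1..N}. f g) \<le> (\<Sum>g\<in>{1..M}. f g) + (\<Sum>g\<in>{M<..N}. f g)"
  proof -
    have "(\<Sum>g\<in>{1..N}. f g) \<le> (\<Sum>g\<in>{1..M} \<union> {M<..N}. f g)"
      by (rule sum_mono2) (auto simp: fnn)
    also have "\<dots> = (\<Sum>g\<in>{1..M}. f g) + (\<Sum>g\<in>{M<..N}. f g)"
      by (rule sum.union_disjoint) auto
    finally show ?thesis .
  qed
  have S2: "(\<Sum>g\<in>{1..M}. f g) \<le> 2 * sqrt (real M)"
  proof -
    have "(\<Sum>g\<in>{1..M}. f g) \<le> (\<Sum>g\<in>{1..M}. 1 / sqrt (real g))"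
    proof (rule sum_mono)
      fix g assume "g \<in> {1..M}"
      have "exp (-(real g * h) / 2) \<le> 1" using h by simp
      then show "f g \<le> 1 / sqrt (real g)" unfolding f_def by (rule divide_right_mono) simp
    qed
    also have "\<dots> \<le> 2 * sqrt (real M)" by (rule inv_sqrt_sum_bound)
    finally show ?thesis .
  qed
  have S3: "(\<Sum>g\<in>{M<..N}. f g) \<le> (x ^ Suc M / (1 - x)) / sqrt (real M + 1)"
  proof -
    have "(\<Sum>g\<in>{M<..N}. f g) \<le> (\<Sum>g\<in>{M<..N}. x ^ g * (1 / sqrt (real M + 1)))"
    proof (rule sum_mono)
      fix g assume "g \<in> {M<..N}"
      then have g: "real M + 1 \<le> real g" by auto
      have eq: "exp (-(real g * h) / 2) = x ^ g"
        unfolding x_def by (subst exp_of_nat_mult[symmetric]) simp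
      have le: "1 / sqrt (real g) \<le> 1 / sqrt (real M + 1)"
        using g by (intro divide_left_mono) auto
      have "f g = x ^ g * (1 / sqrt (real g))" unfolding f_def eq by simp
      also have "\<dots> \<le> x ^ g * (1 / sqrt (real M + 1))" by (rule mult_left_mono[OF le]) (simp add: x0)
      finally show "f g \<le> x ^ g * (1 / sqrt (real M + 1))" .
    qed
    also have "\<dots> = (\<Sum>g\<in>{M<..N}. x ^ g) * (1 / sqrt (real M + 1))"
      by (rule sum_distrib_right[symmetric])
    also have "\<dots> \<le> (x ^ Suc M / (1 - x)) * (1 / sqrt (real M + 1))"
      by (rule mult_right_mono[OF geom_tail_bound[OF x0]]) simp
    finally show ?thesis by simp
  qed
  have xM: "x ^ Suc M \<le> exp (-1/2)"
  proof -
    have "x ^ Suc M = exp (real (Suc M) * (-h / 2))"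
      unfolding x_def by (rule exp_of_nat_mult[symmetric])
    also have "\<dots> \<le> exp (-1/2)" using Mh1 by (simp add: field_simps)
    finally show ?thesis .
  qed
  have inv1x: "1 / (1 - x) \<le> 1 + 2 / h"
  proof -
    have e: "1 + h / 2 \<le> exp (h / 2)" by (rule exp_ge_add_one_self)
    have xe: "x = 1 / exp (h / 2)" by (simp add: x_def exp_minus inverse_eq_divide)
    have "1 / exp (h / 2) \<le> 1 / (1 + h / 2)" by (rule divide_left_mono[OF e]) (use h in auto)
    then have "1 - 1 / (1 + h / 2) \<le> 1 - x" unfolding xe by linarith
    also have "1 - 1 / (1 + h / 2) = h / (h + 2)" using h by (simp add: field_simps)
    finally have hx: "h / (h + 2) \<le> 1 - x" .
    have p1: "0 < h / (h + 2)" using h by simp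
    have p2: "0 < 1 - x" using x0 by simp
    have "1 / (1 - x) \<le> 1 / (h / (h + 2))" by (rule divide_left_mono[OF hx _ mult_pos_pos[OF p2 p1]]) simp
    also have "\<dots> = 1 + 2 / h" using h by (simp add: field_simps)
    finally show ?thesis .
  qed
  have sq: "1 / sqrt (real M + 1) \<le> sqrt h"
  proof -
    have "1 / (real M + 1) \<le> h" using M2 h by (simp add: field_simps)
    then have "sqrt (1 / (real M + 1)) \<le> sqrt h" by simp
    then show ?thesis by (simp add: real_sqrt_divide)
  qed
  have T: "sqrt h * ((x ^ Suc M / (1 - x)) / sqrt (real M + 1)) \<le> (2 + h) * exp (-1/2)"
  proof -
    have P: "x ^ Suc M * (1 / (1 - x)) \<le> exp (-1/2) * (1 + 2 / h)"
      by (rule mult_mono[OF xM inv1x]) (use x0 in auto)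
    have Q: "x ^ Suc M * (1 / (1 - x)) * (1 / sqrt (real M + 1)) \<le> exp (-1/2) * (1 + 2 / h) * sqrt h"
      by (rule mult_mono[OF P sq]) (use h in auto)
    have "sqrt h * ((x ^ Suc M / (1 - x)) / sqrt (real M + 1))
        = sqrt h * (x ^ Suc M * (1 / (1 - x)) * (1 / sqrt (real M + 1)))" by simp
    also have "\<dots> \<le> sqrt h * (exp (-1/2) * (1 + 2 / h) * sqrt h)"
      by (rule mult_left_mono[OF Q]) (use h in simp)
    also have "\<dots> = exp (-1/2) * (1 + 2 / h) * (sqrt h * sqrt h)" by (simp only: mult_ac)
    also have "\<dots> = exp (-1/2) * (1 + 2 / h) * h" using h by simp
    also have "\<dots> = (2 + h) * exp (-1/2)" using h by (simp add: field_simps)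
    finally show ?thesis .
  qed
  have H: "sqrt h * (2 * sqrt (real M)) \<le> 2"
  proof -
    have "real M * h \<le> 1" using M1 h by (simp add: field_simps)
    then have "sqrt (h * real M) \<le> 1" by (simp add: mult.commute)
    then show ?thesis by (simp add: real_sqrt_mult)
  qed
  have S: "(\<Sum>g\<in>{1..N}. f g) \<le> 2 * sqrt (real M) + (x ^ Suc M / (1 - x)) / sqrt (real M + 1)"
    using S1 S2 S3 by linarith
  have "sqrt h * (\<Sum>g\<in>{1..N}. f g) \<le> sqrt h * (2 * sqrt (real M) + (x ^ Suc M / (1 - x)) / sqrt (real M + 1))"
    using S h by (intro mult_left_mono) auto
  also have "\<dots> = sqrt h * (2 * sqrt (real M)) + sqrt h * ((x ^ Suc M / (1 - x)) / sqrt (real M + 1))"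
    by (simp only: distrib_left)
  also have "\<dots> \<le> 2 + (2 + h) * exp (-1/2)" using T H by linarith
  finally show ?thesis unfolding f_def .
qed

lemma R_bound:
  fixes \<delta> h :: real
  assumes d: "\<delta> > 0" and h: "0 < h" "h \<le> 1/100" "h \<le> 2 * \<delta> / 25"
  shows "(\<Sum>g\<in>{1..N}. (exp (h / (4 * \<delta>)) - 1) * (2 * \<delta> / sqrt (2 * pi * (real g * h))) * exp (-(real g * h) / 2)) \<le> 2/3"
proof -
  define u where "u = h / (4 * \<delta>)"
  have u0: "0 < u" using d h by (simp add: u_def)
  have u1: "u \<le> 1/50" using d h by (simp add: u_def field_simps)
  define C where "C = (exp u - 1) * (2 * \<delta>) / sqrt (2 * pi * h)"
  have eq: "(exp u - 1) * (2 * \<delta> / sqrt (2 * pi * (real g * h))) * exp (-(real g * h) / 2)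
      = C * (exp (-(real g * h) / 2) / sqrt (real g))" for g :: nat
    by (simp add: C_def real_sqrt_mult field_simps)
  have eu1: "exp u - 1 \<le> u * exp u"
  proof -
    have "1 - u \<le> exp (-u)" using exp_ge_add_one_self[of "-u"] by simp
    then have "(1 - u) * exp u \<le> exp (-u) * exp u" by (simp add: mult_right_mono)
    then show ?thesis by (simp add: exp_minus field_simps)
  qed
  have eu2: "exp u \<le> 50 / 49"
  proof -
    have "49/50 \<le> exp (-u)" using exp_ge_add_one_self[of "-u"] u1 by simp
    then have "49/50 * exp u \<le> 1" by (simp add: exp_minus field_simps)
    then show ?thesis by simp
  qed
  have e12: "exp (-1/2::real) \<le> 8 / 13"
  proof -
    have "13/8 \<le> exp (1/2::real)" using exp_lower_Taylor_quadratic[of "1/2"] by (simp add: power2_eq_square)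
    then show ?thesis by (simp add: exp_minus field_simps)
  qed
  have pi2: "5 / 2 \<le> sqrt (2 * pi)"
  proof -
    have "25 / 4 \<le> 2 * pi" using pi_approx(1) by simp
    then have "sqrt (25/4) \<le> sqrt (2 * pi)" by (rule real_sqrt_le_mono)
    moreover have "sqrt (25/4) = (5/2::real)" by (simp add: real_sqrt_divide)
    ultimately show ?thesis by simp
  qed
  have C0: "0 \<le> C" using u0 d h by (simp add: C_def)
  have Cb: "C \<le> exp u * sqrt h / (2 * sqrt (2 * pi))"
  proof -
    have "C \<le> u * exp u * (2 * \<delta>) / sqrt (2 * pi * h)"
      unfolding C_def using eu1 d h by (intro divide_right_mono mult_right_mono) auto
    also have "\<dots> = exp u * (h / 2) / (sqrt (2 * pi) * sqrt h)"
      using d by (simp add: u_def real_sqrt_mult field_simps)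
    also have "\<dots> = exp u * sqrt h / (2 * sqrt (2 * pi))"
      using h by (simp add: field_simps; metis real_sqrt_pow2 less_imp_le power2_eq_square)
    finally show ?thesis .
  qed
  define S where "S = (\<Sum>g\<in>{1..N}. exp (-(real g * h) / 2) / sqrt (real g))"
  have S0: "0 \<le> S" unfolding S_def by (intro sum_nonneg) auto
  have Sb: "sqrt h * S \<le> 2 + (2 + h) * exp (-1/2)" unfolding S_def by (rule expsum_bound[OF h(1,2)])
  have "(\<Sum>g\<in>{1..N}. (exp (h / (4 * \<delta>)) - 1) * (2 * \<delta> / sqrt (2 * pi * (real g * h))) * exp (-(real g * h) / 2))
      = C * S" unfolding u_def[symmetric] eq S_def by (simp add: sum_distrib_left)
  also have "\<dots> \<le> exp u * sqrt h / (2 * sqrt (2 * pi)) * S" using Cb S0 by (rule mult_right_mono)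
  also have "\<dots> = exp u * (sqrt h * S) / (2 * sqrt (2 * pi))" by simp
  also have "\<dots> \<le> (50/49) * (2 + (2 + 1/100) * (8/13)) / (2 * (5/2))"
  proof (rule frac_le)
    have "2 + (2 + h) * exp (-1/2) \<le> 2 + (2 + 1/100) * (8/13)"
      using h e12 by (intro add_left_mono mult_mono) auto
    then have "sqrt h * S \<le> 2 + (2 + 1/100) * (8/13)" using Sb by linarith
    then show "exp u * (sqrt h * S) \<le> (50/49) * (2 + (2 + 1/100) * (8/13))"
      using eu2 S0 h by (intro mult_mono) auto
    show "0 \<le> (50/49) * (2 + (2 + 1/100) * (8/13::real))" by simp
    show "0 < 2 * (5/2::real)" by simp
    show "2 * (5/2) \<le> 2 * sqrt (2 * pi)" using pi2 by simp
  qed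
  also have "\<dots> \<le> 2/3" by simp
  finally show ?thesis .
qed

lemma riemann_liminf:
  fixes f :: "real \<Rightarrow> real" and t \<delta> :: real
  assumes f: "continuous_on {0..} f" and t: "t > 0"
  shows "(\<integral>\<^sup>+ s. ennreal (indicator {0..t} s * indicator {-\<delta><..<\<delta>} (f s)) \<partial>lborel)
     \<le> liminf (\<lambda>N. ennreal (t / real N * (\<Sum>j\<in>{0<..N}. indicator {-\<delta><..<\<delta>} (f (real j * (t / real N))))))"
proof -
  define c where "c N j = (indicator {-\<delta><..<\<delta>} (f (real j * (t / real N))) :: real)" for N j :: nat
  define I where "I N j = {(real j - 1) * (t / real N)<..real j * (t / real N)}" for N j :: nat
  define g where "g N s = (\<Sum>j\<in>{0<..N}. ennreal (c N j) * indicator (I N j) s)" for N s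
  have cnn: "0 \<le> c N j" for N j by (simp add: c_def)
  have gm: "g N \<in> borel_measurable lborel" for N
    unfolding g_def I_def by measurable
  have intg: "(\<integral>\<^sup>+ s. g N s \<partial>lborel) = ennreal (t / real N * (\<Sum>j\<in>{0<..N}. c N j))" for N
  proof -
    have "(\<integral>\<^sup>+ s. g N s \<partial>lborel) = (\<Sum>j\<in>{0<..N}. \<integral>\<^sup>+ s. ennreal (c N j) * indicator (I N j) s \<partial>lborel)"
      unfolding g_def by (rule nn_integral_sum) (unfold I_def; measurable)
    also have "\<dots> = (\<Sum>j\<in>{0<..N}. ennreal (c N j * (t / real N)))"
    proof (rule sum.cong)
      fix j assume "j \<in> {0<..N}"
      have le: "(real j - 1) * (t / real N) \<le> real j * (t / real N)" using t by (intro mult_right_mono) auto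
      have "emeasure lborel (I N j) = ennreal (real j * (t / real N) - (real j - 1) * (t / real N))"
        unfolding I_def using le by simp
      also have "real j * (t / real N) - (real j - 1) * (t / real N) = t / real N" by (simp add: left_diff_distrib diff_divide_distrib)
      finally have "emeasure lborel (I N j) = ennreal (t / real N)" .
      moreover have "(\<integral>\<^sup>+ s. ennreal (c N j) * indicator (I N j) s \<partial>lborel) = ennreal (c N j) * emeasure lborel (I N j)"
        by (rule nn_integral_cmult_indicator) (simp add: I_def)
      ultimately show "(\<integral>\<^sup>+ s. ennreal (c N j) * indicator (I N j) s \<partial>lborel) = ennreal (c N j * (t / real N))"
        using t cnn[of N j] by (simp add: ennreal_mult[symmetric])
    qed simp
    also have "\<dots> = ennreal (\<Sum>j\<in>{0<..N}. c N j * (t / real N))"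
      using cnn t by (intro sum_ennreal) auto
    also have "\<dots> = ennreal (t / real N * (\<Sum>j\<in>{0<..N}. c N j))"
      by (simp add: sum_distrib_left mult.commute)
    finally show ?thesis .
  qed
  have pw: "ennreal (indicator {0..t} s * indicator {-\<delta><..<\<delta>} (f s)) \<le> liminf (\<lambda>N. g N s)" if s0: "s \<noteq> 0" for s
  proof (cases "s \<in> {0<..t} \<and> \<bar>f s\<bar> < \<delta>")
    case False
    then have z: "indicator {0..t} s * indicator {-\<delta><..<\<delta>} (f s) = (0::real)"
      using s0 by (auto simp: indicator_def abs_lt_iff)
    show ?thesis unfolding z by simp
  next
    case True
    then have s: "0 < s" "s \<le> t" and fs: "\<bar>f s\<bar> < \<delta>" by auto
    have "\<exists>d>0. \<forall>x'\<in>{0..}. dist x' s < d \<longrightarrow> dist (f x') (f s) < \<delta> - \<bar>f s\<bar>"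
      using f s fs unfolding continuous_on_iff by auto
    then obtain d where d: "d > 0" and dd: "\<And>x'. x' \<ge> 0 \<Longrightarrow> dist x' s < d \<Longrightarrow> dist (f x') (f s) < \<delta> - \<bar>f s\<bar>"
      by auto
    have ev: "eventually (\<lambda>N. 1 \<le> g N s) sequentially"
    proof (rule eventually_sequentiallyI[of "nat \<lceil>t / d\<rceil> + 1"])
      fix N assume N: "nat \<lceil>t / d\<rceil> + 1 \<le> N"
      have Npos: "real N > 0" using N by simp
      have "t / d < real N" using N by linarith
      then have hd: "t / real N < d" using d Npos by (simp add: field_simps)
      define h where "h = t / real N"
      have h0: "h > 0" using t Npos by (simp add: h_def)
      define j where "j = nat \<lceil>s / h\<rceil>"
      have sh0: "s / h > 0" using s h0 by simp
      have j1: "s / h \<le> real j" unfolding j_def by linarith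
      have j2: "real j < s / h + 1" unfolding j_def using sh0 by linarith
      have jpos: "0 < j" using sh0 unfolding j_def by simp
      have "s / h \<le> real N" using s t Npos by (simp add: h_def field_simps)
      then have jN: "j \<le> N" unfolding j_def by (simp add: nat_le_iff ceiling_le_iff)
      have y1: "s \<le> real j * h" using j1 h0 by (simp add: field_simps)
      have y2: "real j * h < s + h" using j2 h0 by (simp add: field_simps)
      have "dist (real j * h) s < d" using y1 y2 hd by (simp add: dist_real_def h_def)
      then have "dist (f (real j * h)) (f s) < \<delta> - \<bar>f s\<bar>" using dd y1 s by auto
      then have "\<bar>f (real j * h)\<bar> < \<delta>" by (simp add: dist_real_def)
      then have cj: "c N j = 1" by (simp add: c_def h_def[symmetric] indicator_def abs_lt_iff)
      have sI: "s \<in> I N j" using y1 y2 unfolding I_def h_def[symmetric] by (simp add: algebra_simps)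
      have "ennreal (c N j) * indicator (I N j) s \<le> g N s"
        unfolding g_def using jpos jN by (intro member_le_sum) auto
      then show "1 \<le> g N s" using cj sI by simp
    qed
    have "indicator {0..t} s * indicator {-\<delta><..<\<delta>} (f s) = (1::real)"
      using s fs by (auto simp: indicator_def abs_lt_iff)
    then show ?thesis using Liminf_bounded[OF ev] by simp
  qed
  have "(\<integral>\<^sup>+ s. ennreal (indicator {0..t} s * indicator {-\<delta><..<\<delta>} (f s)) \<partial>lborel) \<le> (\<integral>\<^sup>+ s. liminf (\<lambda>N. g N s) \<partial>lborel)"
    by (rule nn_integral_mono_AE) (use AE_lborel_singleton[of 0] pw in \<open>auto elim!: eventually_mono\<close>)
  also have "\<dots> \<le> liminf (\<lambda>N. \<integral>\<^sup>+ s. g N s \<partial>lborel)"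
    by (rule nn_integral_liminf[OF gm])
  also have "(\<lambda>N. \<integral>\<^sup>+ s. g N s \<partial>lborel) = (\<lambda>N. ennreal (t / real N * (\<Sum>j\<in>{0<..N}. indicator {-\<delta><..<\<delta>} (f (real j * (t / real N))))))"
    by (rule ext) (simp add: intg c_def)
  finally show ?thesis .
qed

lemma exp_indicator_ennreal:
  fixes c :: real
  assumes "c \<ge> 0"
  shows "ennreal (exp (c * indicator B x)) = 1 + ennreal (exp c - 1) * indicator B x"
proof (cases "x \<in> B")
  case True
  have "1 \<le> exp c" using assms by simp
  then have "ennreal (exp c) = ennreal (1 + (exp c - 1))" by simp
  also have "\<dots> = 1 + ennreal (exp c - 1)" using \<open>1 \<le> exp c\<close> by (subst ennreal_plus) auto
  finally show ?thesis using True by simp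
next
  case False then show ?thesis by simp
qed

theorem lemma9:
  fixes M :: "'a measure" and xi :: "real \<Rightarrow> 'a \<Rightarrow> real"
    and \<delta> k t :: real
  assumes "std_brownian_motion M xi"
    and "\<delta> > 0" and "k > 0" and "t \<ge> 0"
  shows "measure M {\<omega> \<in> space M.
            (LINT s:{0..t}|lborel. indicator {-\<delta><..<\<delta>} (xi s \<omega>)) > k}
         \<le> 3 * exp (t / 2 - k / (4 * \<delta>))"
proof -
  note bm = assms(1) and d = assms(2) and k = assms(3) and t0 = assms(4)
  interpret prob_space M using bm by (simp add: std_brownian_motion_def)
  define A where "A \<omega> = (LINT s:{0..t}|lborel. (indicator {-\<delta><..<\<delta>} (xi s \<omega>) :: real))" for \<omega>
  have bound_pos: "0 \<le> 3 * exp (t / 2 - k / (4 * \<delta>))" by simp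
  show ?thesis
  proof (cases "t = 0")
    case True
    have "A \<omega> = 0" for \<omega>
    proof -
      define G where "G s = (indicator {0..t} s * indicator {-\<delta><..<\<delta>} (xi s \<omega>) :: real)" for s :: real
      have AG: "A \<omega> = integral\<^sup>L lborel G" by (simp add: A_def G_def[abs_def] set_lebesgue_integral_def)
      have "AE s in lborel. G s = 0"
        using AE_lborel_singleton[of 0] by eventually_elim (use \<open>t = 0\<close> in \<open>auto simp: G_def\<close>)
      then show ?thesis using AG integral_eq_zero_AE[of G lborel] by simp
    qed
    then have E: "{\<omega> \<in> space M. (LINT s:{0..t}|lborel. indicator {-\<delta><..<\<delta>} (xi s \<omega>)) > k} = {}"
      using k by (auto simp: A_def)
    show ?thesis unfolding E using bound_pos by simp
  next
    case False
    then have t: "t > 0" using t0 by simp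
    define lam where "lam = 1 / (4 * \<delta>)"
    define S where "S N \<omega> = t / real N * (\<Sum>j\<in>{0<..N}. indicator {-\<delta><..<\<delta>} (xi (real j * (t / real N)) \<omega>))"
      for N :: nat and \<omega>
    have meas[measurable]: "xi (real j * (t / real N)) \<in> borel_measurable M" for j N
      using bm t by (simp add: std_brownian_motion_def)
    have Sm[measurable]: "S N \<in> borel_measurable M" for N unfolding S_def by measurable
    define C where "C m = {\<omega>\<in>space M. \<forall>N\<ge>m. k < S N \<omega>}" for m :: nat
    have Cs: "C m \<in> sets M" for m unfolding C_def by measurable
    have incC: "incseq C" unfolding C_def incseq_def by auto
    have sub: "{\<omega> \<in> space M. k < A \<omega>} \<subseteq> (\<Union>m. C m)"
    proof
      fix \<omega> assume \<omega>: "\<omega> \<in> {\<omega> \<in> space M. k < A \<omega>}"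
      define F where "F s = (indicator {0..t} s * indicator {-\<delta><..<\<delta>} (xi s \<omega>) :: real)" for s :: real
      have AF: "A \<omega> = integral\<^sup>L lborel F" by (simp add: A_def F_def[abs_def] set_lebesgue_integral_def)
      have int: "integrable lborel F"
      proof (rule ccontr)
        assume "\<not> integrable lborel F"
        then have "A \<omega> = 0" using AF not_integrable_integral_eq by simp
        then show False using \<omega> k by simp
      qed
      have "ennreal (A \<omega>) = (\<integral>\<^sup>+ s. ennreal (F s) \<partial>lborel)"
        unfolding AF by (rule nn_integral_eq_integral[symmetric, OF int]) (simp add: F_def)
      also have "\<dots> \<le> liminf (\<lambda>N. ennreal (S N \<omega>))"
        unfolding F_def S_def
        by (rule riemann_liminf[OF _ t]) (use bm \<omega> in \<open>simp add: std_brownian_motion_def\<close>)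
      finally have L: "ennreal (A \<omega>) \<le> liminf (\<lambda>N. ennreal (S N \<omega>))" .
      have "ennreal k < ennreal (A \<omega>)" using \<omega> k by (intro ennreal_lessI) auto
      then have "ennreal k < liminf (\<lambda>N. ennreal (S N \<omega>))" using L by (rule less_le_trans)
      then have "eventually (\<lambda>N. ennreal k < ennreal (S N \<omega>)) sequentially" by (rule less_LiminfD)
      then obtain m where "\<forall>N\<ge>m. ennreal k < ennreal (S N \<omega>)" by (auto simp: eventually_sequentially)
      then have "\<forall>N\<ge>m. k < S N \<omega>" using k by (simp add: ennreal_less_iff)
      then show "\<omega> \<in> (\<Union>m. C m)" using \<omega> unfolding C_def by blast
    qed
    define N0 where "N0 = nat \<lceil>100 * t + 25 * t / (2 * \<delta>)\<rceil> + 1"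
    have Cb: "emeasure M (C m) \<le> ennreal (3 * exp (t / 2 - k / (4 * \<delta>)))" for m
    proof -
      define N where "N = max m N0"
      define h where "h = t / real N"
      have Npos: "real N > 0" by (simp add: N_def N0_def)
      have h0: "h > 0" using t Npos by (simp add: h_def)
      have NN0: "100 * t + 25 * t / (2 * \<delta>) < real N" unfolding N_def N0_def by linarith
      have pos2: "0 \<le> 25 * t / (2 * \<delta>)" using t d by simp
      have h1: "h \<le> 1/100" using NN0 pos2 Npos t by (simp add: h_def field_simps)
      have h2: "h \<le> 2 * \<delta> / 25"
      proof -
        have "25 * t / (2 * \<delta>) < real N" using NN0 t by linarith
        then show ?thesis using d Npos by (simp add: h_def field_simps)
      qed
      define a where "a = exp (h / (4 * \<delta>)) - 1"
      have a0: "a \<ge> 0" using h0 d by (simp add: a_def)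
      define R where "R = (\<Sum>g\<in>{1..N}. a * (2 * \<delta> / sqrt (2 * pi * (real g * h))) * exp (-(real g * h) / 2))"
      have R23: "R \<le> 2/3" unfolding R_def a_def by (rule R_bound[OF d h0 h1 h2])
      have "C m \<subseteq> {\<omega>\<in>space M. k < S N \<omega>}" unfolding C_def N_def by auto
      then have "emeasure M (C m) \<le> emeasure M {\<omega>\<in>space M. k < S N \<omega>}" by (rule emeasure_mono) measurable
      also have "\<dots> = (\<integral>\<^sup>+\<omega>. indicator {\<omega>\<in>space M. k < S N \<omega>} \<omega> \<partial>M)"
        by (rule nn_integral_indicator[symmetric]) measurable
      also have "\<dots> \<le> (\<integral>\<^sup>+\<omega>. ennreal (exp (-lam * k)) * ennreal (exp (lam * S N \<omega>)) \<partial>M)"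
      proof (rule nn_integral_mono)
        fix \<omega> assume "\<omega> \<in> space M"
        have I1: "indicator {\<omega>\<in>space M. k < S N \<omega>} \<omega> \<le> ennreal (exp (-lam * k + lam * S N \<omega>))"
        proof (cases "k < S N \<omega>")
          case True
          then have "0 \<le> -lam * k + lam * S N \<omega>" using d by (simp add: lam_def field_simps)
          then show ?thesis by (simp add: indicator_def)
        qed (simp add: indicator_def)
        have eq: "ennreal (exp (-lam * k)) * ennreal (exp (lam * S N \<omega>)) = ennreal (exp (-lam * k + lam * S N \<omega>))"
          by (subst exp_add) (simp add: ennreal_mult)
        show "indicator {\<omega>\<in>space M. k < S N \<omega>} \<omega> \<le> ennreal (exp (-lam * k)) * ennreal (exp (lam * S N \<omega>))"
          using I1 unfolding eq .
      qed
      also have "\<dots> = ennreal (exp (-lam * k)) * (\<integral>\<^sup>+\<omega>. ennreal (exp (lam * S N \<omega>)) \<partial>M)"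
        by (rule nn_integral_cmult) measurable
      finally have P1: "emeasure M (C m) \<le> ennreal (exp (-lam * k)) * (\<integral>\<^sup>+\<omega>. ennreal (exp (lam * S N \<omega>)) \<partial>M)" .
      have P2: "(\<integral>\<^sup>+\<omega>. ennreal (exp (lam * S N \<omega>)) \<partial>M)
          = (\<integral>\<^sup>+\<omega>. (\<Prod>j\<in>{0<..N}. 1 + ennreal a * indicator {-\<delta><..<\<delta>} (xi (real j * h) \<omega>)) \<partial>M)"
      proof (rule nn_integral_cong)
        fix \<omega>
        have e1: "lam * S N \<omega> = (\<Sum>j\<in>{0<..N}. lam * (h * indicator {-\<delta><..<\<delta>} (xi (real j * h) \<omega>)))"
          unfolding S_def h_def[symmetric] by (simp only: sum_distrib_left)
        have "exp (lam * S N \<omega>) = (\<Prod>j\<in>{0<..N}. exp (lam * (h * indicator {-\<delta><..<\<delta>} (xi (real j * h) \<omega>))))"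
          unfolding e1 by (rule exp_sum) simp
        also have "\<dots> = (\<Prod>j\<in>{0<..N}. exp ((lam * h) * indicator {-\<delta><..<\<delta>} (xi (real j * h) \<omega>)))"
          by (simp only: mult.assoc)
        finally have EP: "exp (lam * S N \<omega>) = (\<Prod>j\<in>{0<..N}. exp ((lam * h) * indicator {-\<delta><..<\<delta>} (xi (real j * h) \<omega>)))" .
        have "ennreal (exp (lam * S N \<omega>)) = (\<Prod>j\<in>{0<..N}. ennreal (exp ((lam * h) * indicator {-\<delta><..<\<delta>} (xi (real j * h) \<omega>))))"
          unfolding EP by (rule prod_ennreal[symmetric]) simp
        also have "\<dots> = (\<Prod>j\<in>{0<..N}. 1 + ennreal a * indicator {-\<delta><..<\<delta>} (xi (real j * h) \<omega>))"
        proof (rule prod.cong[OF refl])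
          fix j
          have "lam * h \<ge> 0" using d h0 by (simp add: lam_def)
          moreover have "exp (lam * h) - 1 = a" by (simp add: a_def lam_def)
          ultimately show "ennreal (exp ((lam * h) * indicator {-\<delta><..<\<delta>} (xi (real j * h) \<omega>)))
              = 1 + ennreal a * indicator {-\<delta><..<\<delta>} (xi (real j * h) \<omega>)"
            using exp_indicator_ennreal[of "lam * h" "{-\<delta><..<\<delta>}" "xi (real j * h) \<omega>"] by simp
        qed
        finally show "ennreal (exp (lam * S N \<omega>)) = (\<Prod>j\<in>{0<..N}. 1 + ennreal a * indicator {-\<delta><..<\<delta>} (xi (real j * h) \<omega>))" .
      qed
      have P3: "(\<integral>\<^sup>+\<omega>. (\<Prod>j\<in>{0<..N}. 1 + ennreal a * indicator {-\<delta><..<\<delta>} (xi (real j * h) \<omega>)) \<partial>M)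
          \<le> ennreal (exp (real N * h / 2) / (1 - R))"
        unfolding R_def by (rule disc_moment[OF bm d h0 a0]) (use R23 in \<open>simp add: R_def\<close>)
      have rb: "exp (real N * h / 2) / (1 - R) \<le> exp (t / 2) * 3"
      proof -
        have NH: "real N * h = t" using Npos by (simp add: h_def)
        have R1: "0 < 1 - R" using R23 by simp
        have "1 / (1 - R) \<le> 3" using R23 R1 by (simp add: pos_divide_le_eq)
        then have "exp (t / 2) * (1 / (1 - R)) \<le> exp (t / 2) * 3" by (rule mult_left_mono) simp
        then show ?thesis using NH by simp
      qed
      have "(\<integral>\<^sup>+\<omega>. ennreal (exp (lam * S N \<omega>)) \<partial>M) \<le> ennreal (exp (t / 2) * 3)"
        unfolding P2 using P3 ennreal_leI[OF rb] by (rule order_trans)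
      then have "ennreal (exp (-lam * k)) * (\<integral>\<^sup>+\<omega>. ennreal (exp (lam * S N \<omega>)) \<partial>M) \<le> ennreal (exp (-lam * k)) * ennreal (exp (t / 2) * 3)"
        by (rule mult_left_mono) simp
      then have "emeasure M (C m) \<le> ennreal (exp (-lam * k)) * ennreal (exp (t / 2) * 3)"
        by (rule order_trans[OF P1])
      also have "ennreal (exp (-lam * k)) * ennreal (exp (t / 2) * 3) = ennreal (exp (-lam * k) * (exp (t / 2) * 3))"
        by (rule ennreal_mult[symmetric]) auto
      also have "ennreal (exp (-lam * k) * (exp (t / 2) * 3)) = ennreal (3 * exp (t / 2 - k / (4 * \<delta>)))"
      proof -
        have l1: "-lam * k = -(k / (4 * \<delta>))" by (simp add: lam_def)
        have l2: "exp (t / 2 - k / (4 * \<delta>)) = exp (t / 2) * exp (-(k / (4 * \<delta>)))"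
          by (simp add: exp_add[symmetric])
        have "exp (-lam * k) * (exp (t / 2) * 3) = 3 * exp (t / 2 - k / (4 * \<delta>))"
          unfolding l1 l2 by (simp add: mult_ac)
        then show ?thesis by simp
      qed
      finally show ?thesis .
    qed
    have "emeasure M (\<Union>m. C m) = (SUP m. emeasure M (C m))"
      by (rule SUP_emeasure_incseq[symmetric]) (use Cs incC in auto)
    also have "\<dots> \<le> ennreal (3 * exp (t / 2 - k / (4 * \<delta>)))" by (rule SUP_least) (rule Cb)
    finally have U: "emeasure M (\<Union>m. C m) \<le> ennreal (3 * exp (t / 2 - k / (4 * \<delta>)))" .
    have Us: "(\<Union>m. C m) \<in> sets M" using Cs by auto
    have "measure M {\<omega> \<in> space M. k < A \<omega>} \<le> 3 * exp (t / 2 - k / (4 * \<delta>))"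
    proof (cases "{\<omega> \<in> space M. k < A \<omega>} \<in> sets M")
      case True
      have "measure M {\<omega> \<in> space M. k < A \<omega>} \<le> measure M (\<Union>m. C m)"
        by (rule finite_measure_mono[OF sub Us])
      also have "\<dots> \<le> 3 * exp (t / 2 - k / (4 * \<delta>))"
        using U bound_pos by (simp add: emeasure_eq_measure)
      finally show ?thesis .
    next
      case False
      then show ?thesis using bound_pos by (simp add: measure_notin_sets)
    qed
    then show ?thesis by (simp add: A_def)
  qed
qed

end
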